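(* Let $\mathcal{C}$ be an $[n,k]_q$ MWS code such that for every $c\in\mathcal{C}\setminus\{0\}$ the entries of $V(c)$ are pairwise distinct. Then for each $i\in\{1,\dots,q-1\}$ there exists a non-zero $r=(r_1,\dots,r_{q-1})\in\mathbb{N}^{q-1}$ such that $$\sum_{j=1}^{q-1} r_j\left(a[\alpha^{i-j}]-b[\alpha^{i-j}]\right)\neq 0\quad\text{for all } a,b\in\mathcal{C},\ a\ne b.$$
   Context: $\alpha$ is a fixed primitive element of $\mathbb{F}_q$ (exponents modulo $q-1$), $\mathbb{N}=\{0,1,2,\dots\}$. An $[n,k]_q$ code is a $k$-dimensional subspace of $\mathbb{F}_q^n$ (non-degenerate if $k\ge2$); it is MWS if it has exactly $\frac{q^k-1}{q-1}$ distinct non-zero Hamming weights. For $c\in\mathbb{F}_q^n$, $\beta\in\mathbb{F}_q$, $c[\beta]=|\{l:c_l=\beta\}|$ and $V(c)=(c[\alpha],\dots,c[\alpha^{q-1}],c[0])$. *)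

theory Defs
  imports "HOL-Analysis.Analysis"
begin

definition primitive_elem :: "'a::{finite,field} \<Rightarrow> bool" where
  "primitive_elem \<alpha> \<longleftrightarrow> \<alpha> \<noteq> 0 \<and> (\<forall>x. x \<noteq> 0 \<longrightarrow> (\<exists>j::nat. x = \<alpha> ^ j))"

definition apow :: "'a::{finite,field} \<Rightarrow> int \<Rightarrow> 'a" where
  "apow \<alpha> e = \<alpha> ^ nat (e mod int (CARD('a) - 1))"

definition cnt :: "'a ^ 'n::finite \<Rightarrow> 'a \<Rightarrow> nat" where
  "cnt c \<beta> = card {l. c $ l = \<beta>}"

definition Vvec :: "'a::{finite,field} \<Rightarrow> 'a ^ 'n::finite \<Rightarrow> nat list" where
  "Vvec \<alpha> c = map (\<lambda>j. cnt c (\<alpha> ^ j)) [1..<CARD('a)] @ [cnt c 0]"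

definition hweight :: "'a::zero ^ 'n::finite \<Rightarrow> nat" where
  "hweight c = card {l. c $ l \<noteq> 0}"

definition lin_code :: "('a::{finite,field} ^ 'n::finite) set \<Rightarrow> nat \<Rightarrow> bool" where
  "lin_code C k \<longleftrightarrow> vec.subspace C \<and> vec.dim C = k"

definition MWS :: "('a::{finite,field} ^ 'n::finite) set \<Rightarrow> nat \<Rightarrow> bool" where
  "MWS C k \<longleftrightarrow> card {hweight c | c. c \<in> C \<and> c \<noteq> 0 \<and> hweight c \<noteq> 0}
      = (CARD('a) ^ k - 1) div (CARD('a) - 1)"

end

theory Submission
  imports Defs
begin

lemma card_nonzero: "card {y::'a::{finite,field}. y \<noteq> 0} = CARD('a) - 1"
proof -
  have "{y::'a. y \<noteq> 0} = UNIV - {0}" by auto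
  thus ?thesis by (simp add: card_Diff_singleton)
qed

lemma card_ge2: "CARD('a::{finite,field}) \<ge> 2"
proof -
  have "{0::'a, 1} \<subseteq> UNIV" by auto
  hence "card {0::'a, 1} \<le> CARD('a)" by (intro card_mono) auto
  thus ?thesis by simp
qed

lemma fermat_field:
  fixes x :: "'a::{finite,field}"
  assumes "x \<noteq> 0"
  shows "x ^ (CARD('a) - 1) = 1"
proof -
  let ?U = "{y::'a. y \<noteq> 0}"
  have inj: "inj_on (\<lambda>y. x * y) ?U" using assms by (auto simp: inj_on_def)
  have img: "(\<lambda>y. x * y) ` ?U = ?U"
  proof
    show "(\<lambda>y. x * y) ` ?U \<subseteq> ?U" using assms by auto
    show "?U \<subseteq> (\<lambda>y. x * y) ` ?U"
    proof
      fix z assume "z \<in> ?U"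
      hence "z = x * (z / x)" "z / x \<in> ?U" using assms by auto
      thus "z \<in> (\<lambda>y. x * y) ` ?U" by blast
    qed
  qed
  have "prod id ?U = prod id ((\<lambda>y. x * y) ` ?U)" using img by simp
  also have "\<dots> = prod (\<lambda>y. x * y) ?U" using prod.reindex[OF inj] by simp
  also have "\<dots> = x ^ card ?U * prod id ?U" by (simp add: prod.distrib)
  finally have "prod id ?U = x ^ card ?U * prod id ?U" .
  moreover have "prod id ?U \<noteq> 0" by simp
  ultimately have "x ^ card ?U = 1" by simp
  thus ?thesis by (simp add: card_nonzero)
qed

lemma pow_mod:
  fixes x :: "'a::{finite,field}"
  assumes "x \<noteq> 0"
  shows "x ^ j = x ^ (j mod (CARD('a) - 1))"
proof -
  have "x ^ j = x ^ ((CARD('a) - 1) * (j div (CARD('a) - 1)) + j mod (CARD('a) - 1))" by (metis mult_div_mod_eq)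
  also have "\<dots> = (x ^ (CARD('a) - 1)) ^ (j div (CARD('a) - 1)) * x ^ (j mod (CARD('a) - 1))"
    by (simp only: power_add power_mult)
  finally show ?thesis using fermat_field[OF assms] by simp
qed



lemma digit_bound:
  fixes N :: nat
  assumes "\<forall>j\<in>{1..m}. x j < N" "N > 0"
  shows "(\<Sum>j=1..m. N^j * x j) < N ^ Suc m"
  using assms
proof (induction m)
  case 0
  then show ?case by simp
next
  case (Suc m)
  have a: "(\<Sum>j=1..m. N^j * x j) < N ^ Suc m" using Suc by auto
  have "Suc m \<in> {1..Suc m}" by simp
  hence "x (Suc m) < N" using Suc.prems(1) by blast
  hence b: "x (Suc m) + 1 \<le> N" by simp
  have "(\<Sum>j=1..Suc m. N^j * x j) = (\<Sum>j=1..m. N^j * x j) + N^Suc m * x (Suc m)" by simp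
  also have "\<dots> < N^Suc m + N^Suc m * x (Suc m)" using a by simp
  also have "\<dots> = N^Suc m * (x (Suc m) + 1)" by (simp add: algebra_simps)
  also have "\<dots> \<le> N^Suc m * N" using b by (rule mult_le_mono2)
  finally show ?case by (simp add: mult.commute)
qed

lemma digit_unique:
  fixes N :: nat
  assumes "\<forall>j\<in>{1..m}. x j < N" "\<forall>j\<in>{1..m}. y j < N" "N > 0"
    and "(\<Sum>j=1..m. N^j * x j) = (\<Sum>j=1..m. N^j * y j)"
  shows "\<forall>j\<in>{1..m}. x j = y j"
  using assms
proof (induction m)
  case 0
  then show ?case by simp
next
  case (Suc m)
  let ?A = "\<Sum>j=1..m. N^j * x j" and ?B = "\<Sum>j=1..m. N^j * y j"
  have a: "?A < N ^ Suc m" by (rule digit_bound) (use Suc.prems in auto)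
  have b: "?B < N ^ Suc m" by (rule digit_bound) (use Suc.prems in auto)
  have e: "?A + N^Suc m * x (Suc m) = ?B + N^Suc m * y (Suc m)" using Suc.prems(4) by simp
  have P: "N^Suc m \<noteq> 0" using Suc.prems(3) by simp
  have "(?A + N^Suc m * x (Suc m)) div N^Suc m = x (Suc m) + ?A div N^Suc m" using P by (rule div_mult_self2)
  also have "?A div N^Suc m = 0" using a by (rule div_less)
  finally have AA: "(?A + N^Suc m * x (Suc m)) div N^Suc m = x (Suc m)" by simp
  have "(?B + N^Suc m * y (Suc m)) div N^Suc m = y (Suc m) + ?B div N^Suc m" using P by (rule div_mult_self2)
  also have "?B div N^Suc m = 0" using b by (rule div_less)
  finally have BB: "(?B + N^Suc m * y (Suc m)) div N^Suc m = y (Suc m)" by simp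
  have xy: "x (Suc m) = y (Suc m)" using e AA BB by metis
  hence "?A = ?B" using e by simp
  moreover have "\<forall>j\<in>{1..m}. x j < N" using Suc.prems(1) by auto
  moreover have "\<forall>j\<in>{1..m}. y j < N" using Suc.prems(2) by auto
  ultimately have IH: "\<forall>j\<in>{1..m}. x j = y j" using Suc.IH Suc.prems(3) by blast
  show ?case
  proof
    fix j assume "j \<in> {1..Suc m}"
    hence "j = Suc m \<or> j \<in> {1..m}" by auto
    thus "x j = y j" using IH xy by blast
  qed
qed

lemma pm1_dvd: "((q::nat) - 1) dvd (q ^ k - 1)"
proof (induction k)
  case 0 then show ?case by simp
next
  case (Suc k)
  show ?case
  proof (cases "q = 0")
    case True then show ?thesis by simp
  next
    case False
    hence "q ^ Suc k - 1 = q * (q ^ k - 1) + (q - 1)"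
      by (simp add: algebra_simps diff_mult_distrib2)
    thus ?thesis using Suc by simp
  qed
qed



lemma card_subspace:
  fixes C :: "('a::{finite,field}^'n::finite) set"
  assumes "vec.subspace C"
  shows "card C = CARD('a) ^ vec.dim C"
proof -
  obtain B where B: "B \<subseteq> C" "vec.independent B" "C \<subseteq> vec.span B" "card B = vec.dim C"
    by (rule vec.basis_exists)
  have fB: "finite B" by simp
  define g where "g u = (\<Sum>v\<in>B. u v *s v)" for u :: "'a^'n \<Rightarrow> 'a"
  have spanB: "vec.span B = C"
    using B(1,3) vec.span_minimal[OF B(1) assms] by blast
  have img: "g ` PiE B (\<lambda>_. UNIV) = C"
  proof
    show "g ` PiE B (\<lambda>_. UNIV) \<subseteq> C"
      using spanB vec.span_finite[OF fB] by (auto simp: g_def)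
    show "C \<subseteq> g ` PiE B (\<lambda>_. UNIV)"
    proof
      fix c assume "c \<in> C"
      then obtain u where u: "c = g u" using spanB vec.span_finite[OF fB] by (auto simp: g_def)
      have "g (restrict u B) = g u" unfolding g_def by (rule sum.cong) auto
      moreover have "restrict u B \<in> PiE B (\<lambda>_. UNIV)" by simp
      ultimately show "c \<in> g ` PiE B (\<lambda>_. UNIV)" using u by (metis image_eqI)
    qed
  qed
  have inj: "inj_on g (PiE B (\<lambda>_. UNIV))"
  proof (rule inj_onI)
    fix u w assume u: "u \<in> PiE B (\<lambda>_. UNIV)" and w: "w \<in> PiE B (\<lambda>_. UNIV)" and e: "g u = g w"
    have "(\<Sum>v\<in>B. (u v - w v) *s v) = g u - g w"
      unfolding g_def by (simp add: vec.scale_left_diff_distrib sum_subtractf)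
    also have "\<dots> = 0" using e by simp
    finally have z: "(\<Sum>v\<in>B. (u v - w v) *s v) = 0" .
    have "\<forall>c. (\<Sum>v\<in>B. c v *s v) = 0 \<longrightarrow> (\<forall>v\<in>B. c v = 0)"
      using B(2) unfolding vec.independent_explicit by blast
    from spec[OF this, of "\<lambda>v. u v - w v"] z have "\<forall>v\<in>B. u v - w v = 0" by simp
    hence "\<forall>v\<in>B. u v = w v" by simp
    thus "u = w" using u w by (auto intro: PiE_ext)
  qed
  have "card C = card (PiE B (\<lambda>_. UNIV :: 'a set))"
    using card_image[OF inj] img by simp
  also have "\<dots> = CARD('a) ^ card B" by (simp add: card_PiE fB)
  finally show ?thesis using B(4) by simp
qed



lemma hweight_scale:
  fixes x :: "'a::field^'n::finite"
  assumes "c \<noteq> 0"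
  shows "hweight (c *s x) = hweight x"
  unfolding hweight_def using assms by simp

lemma hweight_pos:
  fixes x :: "'a::field^'n::finite"
  assumes "x \<noteq> 0"
  shows "hweight x \<noteq> 0"
proof -
  obtain l where "x $ l \<noteq> 0" using assms by (metis vec_eq_iff zero_index)
  hence "{l. x $ l \<noteq> 0} \<noteq> {}" by auto
  thus ?thesis unfolding hweight_def by simp
qed

lemma card_line:
  fixes x :: "'a::{finite,field}^'n::finite"
  assumes "x \<noteq> 0"
  shows "card ((\<lambda>c. c *s x) ` {c. c \<noteq> 0}) = CARD('a) - 1"
proof -
  have "inj_on (\<lambda>c. c *s x) {c. c \<noteq> 0}"
    by (rule inj_onI) (use assms vec.scale_right_imp_eq in blast)
  thus ?thesis by (simp add: card_image card_nonzero)
qed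

lemma mws_lines:
  fixes C :: "('a::{finite,field}^'n::finite) set"
  assumes lc: "lin_code C k" and mws: "MWS C k" and "a \<in> C" "b \<in> C" "a \<noteq> 0" "b \<noteq> 0"
    and hw: "hweight a = hweight b"
  shows "\<exists>t. t \<noteq> 0 \<and> b = t *s a"
proof (rule ccontr)
  assume nl: "\<not> (\<exists>t. t \<noteq> 0 \<and> b = t *s a)"
  define m where "m = CARD('a) - 1"
  have m0: "m > 0" using card_ge2[where 'a='a] unfolding m_def by simp
  have sub: "vec.subspace C" and dk: "vec.dim C = k" using lc unfolding lin_code_def by auto
  define S where "S = C - {0}"
  define W where "W = hweight ` S"
  define F where "F w = {x\<in>S. hweight x = w}" for w
  define L where "L x = (\<lambda>c. c *s x) ` {c::'a. c \<noteq> 0}" for x :: "'a^'n"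
  have fS: "finite S" by simp
  have fW: "finite W" unfolding W_def by simp
  have cS: "card S = CARD('a) ^ k - 1"
    unfolding S_def using card_subspace[OF sub] dk vec.subspace_0[OF sub]
    by (simp add: card_Diff_singleton)
  have Weq: "{hweight c | c. c \<in> C \<and> c \<noteq> 0 \<and> hweight c \<noteq> 0} = W"
    unfolding W_def S_def using hweight_pos by blast
  have cW: "card W = (CARD('a) ^ k - 1) div m"
    using mws Weq unfolding MWS_def m_def by simp
  have cS2: "card S = m * card W"
    using cS cW pm1_dvd[of "CARD('a)" k] unfolding m_def by simp
  have Sun: "S = (\<Union>w\<in>W. F w)" unfolding F_def W_def by auto
  have cSum: "card S = (\<Sum>w\<in>W. card (F w))"
    unfolding Sun by (rule card_UN_disjoint) (auto simp: F_def W_def)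
  have LF: "L x \<subseteq> F (hweight x)" if "x \<in> S" for x
    using that vec.subspace_scale[OF sub] hweight_scale
    unfolding L_def F_def S_def by auto
  have cL: "card (L x) = m" if "x \<in> S" for x
    using that card_line unfolding L_def S_def m_def by auto
  have Fge: "card (F w) \<ge> m" if wW: "w \<in> W" for w
  proof -
    obtain x where x: "x \<in> S" "w = hweight x" using wW unfolding W_def by auto
    have "card (L x) \<le> card (F w)" using LF[OF x(1)] x(2) by (intro card_mono) (auto simp: F_def)
    thus ?thesis using cL[OF x(1)] by simp
  qed
  have aS: "a \<in> S" and bS: "b \<in> S" using assms unfolding S_def by auto
  define w0 where "w0 = hweight a"
  have w0W: "w0 \<in> W" unfolding w0_def W_def using aS by auto
  have disj: "L a \<inter> L b = {}"
  proof (rule ccontr)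
    assume "L a \<inter> L b \<noteq> {}"
    then obtain c d where cd: "c \<noteq> 0" "d \<noteq> 0" "c *s a = d *s b" unfolding L_def by auto
    hence "(inverse d * c) *s a = b" by (metis vec.scale_scale vec.scale_one left_inverse)
    moreover have "inverse d * c \<noteq> 0" using cd by simp
    ultimately show False using nl by metis
  qed
  have "L a \<union> L b \<subseteq> F w0" using LF[OF aS] LF[OF bS] hw unfolding w0_def by auto
  hence "card (L a \<union> L b) \<le> card (F w0)" by (intro card_mono) (auto simp: F_def)
  hence F0: "card (F w0) \<ge> 2 * m" using card_Un_disjoint[of "L a" "L b"] disj cL[OF aS] cL[OF bS]
    by simp
  have e1: "card S = card (F w0) + (\<Sum>w\<in>W - {w0}. card (F w))"
    using cSum sum.remove[OF fW w0W, of "\<lambda>w. card (F w)"] by simp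
  have e2: "(\<Sum>w\<in>W - {w0}. card (F w)) \<ge> (\<Sum>w\<in>W - {w0}. m)"
    by (rule sum_mono) (use Fge in auto)
  have e3: "(\<Sum>w\<in>W - {w0}. m) = m * (card W - 1)"
    using fW w0W by (simp add: card_Diff_singleton)
  have "card S \<ge> 2 * m + m * (card W - 1)" using e1 e2 e3 F0 by linarith
  moreover have "card W \<ge> 1" using w0W by (metis card_0_eq finite_imageI fS W_def empty_iff less_one not_le)
  ultimately have "m * card W \<ge> m * card W + m" using cS2 by (simp add: algebra_simps diff_mult_distrib2)
  thus False using m0 by simp
qed



lemma cnt_lt: "cnt (c::'a^'n::finite) \<beta> < CARD('n) + 1"
proof -
  have "cnt c \<beta> \<le> CARD('n)" unfolding cnt_def by (intro card_mono) auto
  thus ?thesis by simp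
qed

lemma hweight_cnt:
  fixes c :: "'a::{finite,field}^'n::finite"
  shows "hweight c = (\<Sum>\<beta>\<in>{\<beta>. \<beta> \<noteq> 0}. cnt c \<beta>)"
proof -
  have "{l. c $ l \<noteq> 0} = (\<Union>\<beta>\<in>{\<beta>. \<beta> \<noteq> 0}. {l. c $ l = \<beta>})" by auto
  hence "card {l. c $ l \<noteq> 0} = (\<Sum>\<beta>\<in>{\<beta>::'a. \<beta> \<noteq> 0}. card {l. c $ l = \<beta>})"
    by (simp only:) (rule card_UN_disjoint, auto)
  thus ?thesis unfolding hweight_def cnt_def by simp
qed

lemma cnt_scale:
  fixes a :: "'a::field^'n::finite"
  assumes "t \<noteq> 0"
  shows "cnt (t *s a) (t * \<beta>) = cnt a \<beta>"
  unfolding cnt_def using assms by simp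

lemma cover:
  fixes \<alpha> :: "'a::{finite,field}"
  assumes prim: "primitive_elem \<alpha>" and "\<beta> \<noteq> 0"
  shows "\<exists>j\<in>{1..CARD('a) - 1}. \<beta> = apow \<alpha> (int i - int j)"
proof -
  define m where "m = CARD('a) - 1"
  have m0: "m > 0" using card_ge2[where 'a='a] unfolding m_def by simp
  have a0: "\<alpha> \<noteq> 0" using prim unfolding primitive_elem_def by simp
  obtain t where t: "\<beta> = \<alpha> ^ t" using prim assms unfolding primitive_elem_def by auto
  define e where "e = t mod m"
  have be: "\<beta> = \<alpha> ^ e" using t pow_mod[OF a0, of t] unfolding e_def m_def by simp
  have em: "e < m" using m0 unfolding e_def by simp
  define ji where "ji = (int i - int e - 1) mod int m + 1"
  have "(int i - int e - 1) mod int m < int m" "(int i - int e - 1) mod int m \<ge> 0" using m0 by simp_all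
  hence ji1: "ji \<ge> 1" "ji \<le> int m" unfolding ji_def by auto
  define j where "j = nat ji"
  have jr: "int j = ji" using ji1 unfolding j_def by simp
  have "(int i - ji) mod int m = (int i - 1 - (int i - int e - 1) mod int m) mod int m"
    unfolding ji_def by (simp add: algebra_simps)
  also have "\<dots> = (int i - 1 - (int i - int e - 1)) mod int m" by (simp add: mod_diff_right_eq)
  also have "\<dots> = int e" using em by simp
  finally have "apow \<alpha> (int i - int j) = \<alpha> ^ e" unfolding apow_def jr m_def[symmetric] by simp
  moreover have "j \<in> {1..m}" using ji1 jr by auto
  ultimately show ?thesis using be unfolding m_def by (metis (no_types))
qed



lemma cnt_lt': "cnt (c::'a^'n::finite) \<beta> < Suc CARD('n)"
  using cnt_lt[of c \<beta>] by simp

lemma cnt_zero_vec: "\<beta> \<noteq> 0 \<Longrightarrow> cnt (0::'a::zero^'n::finite) \<beta> = 0"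
  unfolding cnt_def by simp

lemma cnt_pos: "(b::'a^'n::finite) $ l = \<beta> \<Longrightarrow> cnt b \<beta> \<noteq> 0"
  unfolding cnt_def by auto

lemma nz_has: "(b::'a::zero^'n::finite) \<noteq> 0 \<Longrightarrow> \<exists>l. b $ l \<noteq> 0"
  by (metis vec_eq_iff zero_index)

lemma same_counts:
  fixes \<alpha> :: "'a::{finite,field}" and C :: "('a ^ 'n::finite) set"
  assumes prim: "primitive_elem \<alpha>"
    and lc: "lin_code C k"
    and mws: "MWS C k"
    and dist: "\<forall>c\<in>C. c \<noteq> 0 \<longrightarrow> distinct (Vvec \<alpha> c)"
    and aC: "a \<in> C" and bC: "b \<in> C"
    and eq: "\<forall>\<beta>. \<beta> \<noteq> 0 \<longrightarrow> cnt a \<beta> = cnt b \<beta>"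
  shows "a = b"
proof (rule ccontr)
  assume ne: "a \<noteq> b"
  define m where "m = CARD('a) - 1"
  have m0: "m > 0" using card_ge2[where 'a='a] unfolding m_def by simp
  have a0: "\<alpha> \<noteq> 0" using prim unfolding primitive_elem_def by simp
  have "a \<noteq> 0"
  proof
    assume "a = 0"
    hence "b \<noteq> 0" using ne by simp
    then obtain l where "b $ l \<noteq> 0" using nz_has by blast
    thus False using eq cnt_pos[of b l] cnt_zero_vec \<open>a = 0\<close> by metis
  qed
  moreover have "b \<noteq> 0"
  proof
    assume "b = 0"
    hence "a \<noteq> 0" using ne by simp
    then obtain l where "a $ l \<noteq> 0" using nz_has by blast
    thus False using eq cnt_pos[of a l] cnt_zero_vec \<open>b = 0\<close> by metis
  qed
  moreover have "hweight a = hweight b" unfolding hweight_cnt using eq by simp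
  ultimately obtain t where t: "t \<noteq> 0" "b = t *s a" using mws_lines[OF lc mws aC bC] by blast
  obtain s where s: "t = \<alpha> ^ s" using prim t unfolding primitive_elem_def by auto
  define s' where "s' = s mod m"
  have ts: "t = \<alpha> ^ s'" using s pow_mod[OF a0, of s] unfolding s'_def m_def by simp
  have sm: "s' < m" using m0 unfolding s'_def by simp
  have "s' \<noteq> 0"
  proof
    assume "s' = 0"
    hence "t = 1" using ts by simp
    thus False using t ne by simp
  qed
  have "cnt a (\<alpha> ^ (s' + 1)) = cnt b (\<alpha> ^ (s' + 1))" using eq a0 by simp
  also have "\<dots> = cnt (t *s a) (t * \<alpha>)" using t(2) ts by (simp add: power_add mult.commute)
  also have "\<dots> = cnt a \<alpha>" by (rule cnt_scale[OF t(1)])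
  finally have ce: "(\<lambda>j. cnt a (\<alpha> ^ j)) (s' + 1) = (\<lambda>j. cnt a (\<alpha> ^ j)) 1" by simp
  have "distinct (Vvec \<alpha> a)" using dist aC \<open>a \<noteq> 0\<close> by blast
  hence "distinct (map (\<lambda>j. cnt a (\<alpha> ^ j)) [1..<CARD('a)])" unfolding Vvec_def by simp
  hence inj: "inj_on (\<lambda>j. cnt a (\<alpha> ^ j)) {1..<CARD('a)}" by (simp add: distinct_map)
  have "s' + 1 \<in> {1..<CARD('a)}" "1 \<in> {1..<CARD('a)}" using sm m0 unfolding m_def by auto
  hence "s' + 1 = 1" using inj_onD[OF inj ce] by blast
  thus False using \<open>s' \<noteq> 0\<close> by simp
qed

theorem mainTheorem7:
  fixes \<alpha> :: "'a::{finite,field}" and C :: "('a ^ 'n::finite) set" and k :: nat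
  assumes "primitive_elem \<alpha>"
    and "lin_code C k"
    and "MWS C k"
    and "\<forall>c\<in>C. c \<noteq> 0 \<longrightarrow> distinct (Vvec \<alpha> c)"
  shows "\<forall>i\<in>{1..CARD('a) - 1}. \<exists>r::nat \<Rightarrow> nat. (\<exists>j\<in>{1..CARD('a) - 1}. r j \<noteq> 0) \<and>
     (\<forall>a\<in>C. \<forall>b\<in>C. a \<noteq> b \<longrightarrow>
        (\<Sum>j=1..CARD('a) - 1. int (r j) *
            (int (cnt a (apow \<alpha> (int i - int j))) - int (cnt b (apow \<alpha> (int i - int j))))) \<noteq> 0)"
proof
  fix i assume "i \<in> {1..CARD('a) - 1}"
  define N where "N = CARD('n) + 1"
  define m where "m = CARD('a) - 1"
  have m0: "m > 0" using card_ge2[where 'a='a] unfolding m_def by simp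
  show "\<exists>r::nat \<Rightarrow> nat. (\<exists>j\<in>{1..CARD('a) - 1}. r j \<noteq> 0) \<and>
     (\<forall>a\<in>C. \<forall>b\<in>C. a \<noteq> b \<longrightarrow>
        (\<Sum>j=1..CARD('a) - 1. int (r j) *
            (int (cnt a (apow \<alpha> (int i - int j))) - int (cnt b (apow \<alpha> (int i - int j))))) \<noteq> 0)"
  proof (intro exI conjI ballI impI)
    show "\<exists>j\<in>{1..CARD('a) - 1}. (\<lambda>j. N ^ j) j \<noteq> 0"
      using m0 unfolding m_def N_def by (intro bexI[of _ 1]) auto
  next
    fix a b assume aC: "a \<in> C" and bC: "b \<in> C" and ne: "a \<noteq> b"
    define X where "X j = cnt a (apow \<alpha> (int i - int j))" for j
    define Y where "Y j = cnt b (apow \<alpha> (int i - int j))" for j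
    show "(\<Sum>j=1..CARD('a) - 1. int ((\<lambda>j. N ^ j) j) *
            (int (cnt a (apow \<alpha> (int i - int j))) - int (cnt b (apow \<alpha> (int i - int j))))) \<noteq> 0"
    proof
      assume z: "(\<Sum>j=1..CARD('a) - 1. int ((\<lambda>j. N ^ j) j) *
            (int (cnt a (apow \<alpha> (int i - int j))) - int (cnt b (apow \<alpha> (int i - int j))))) = 0"
      have "(\<Sum>j=1..m. int (N ^ j) * (int (X j) - int (Y j))) =
            int (\<Sum>j=1..m. N^j * X j) - int (\<Sum>j=1..m. N^j * Y j)"
        by (simp add: sum_subtractf right_diff_distrib)
      hence "int (\<Sum>j=1..m. N^j * X j) = int (\<Sum>j=1..m. N^j * Y j)"
        using z unfolding X_def Y_def m_def by simp
      hence "(\<Sum>j=1..m. N^j * X j) = (\<Sum>j=1..m. N^j * Y j)" by (rule of_nat_eq_iff[THEN iffD1])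
      hence XY: "\<forall>j\<in>{1..m}. X j = Y j"
        by (intro digit_unique) (auto simp: X_def Y_def N_def intro: cnt_lt')
      have "\<forall>\<beta>. \<beta> \<noteq> 0 \<longrightarrow> cnt a \<beta> = cnt b \<beta>"
      proof (intro allI impI)
        fix \<beta> :: 'a assume "\<beta> \<noteq> 0"
        then obtain j where "j \<in> {1..m}" "\<beta> = apow \<alpha> (int i - int j)"
          using cover[OF assms(1)] unfolding m_def by blast
        thus "cnt a \<beta> = cnt b \<beta>" using XY unfolding X_def Y_def by simp
      qed
      thus False using same_counts[OF assms aC bC] ne by blast
    qed
  qed
qed


end
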